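(* Consider the $2\times 1$ merge network with parameters $c>0$, $k>0$, $\eta\in(0,\tfrac12)$, constant downstream queue length $Q\ge 0$, upstream capacities $c_1=c$, $c_2=kc$, inflows $f_i=\eta c_i$, and arbitrary weights $\gamma_0,\gamma_1,\gamma_2>0$, operated under the generalized backpressure rule. Suppose the network is in regime R1, with unsaturated upstream queue $u$ and saturated upstream queue $s$. Then the network converges to a steady state: there exists $t_0$ such that for all $t\ge t_0$, $$f_u\le q_u(t)\le 2f_u\qquad\text{and}\qquad q_{s,act}+(f_s-c_s)\le q_s(t)\le q_{s,act}+f_s,$$ where $$q_{s,act}=\frac{\gamma_0}{\gamma_s}\Big(1-\frac{c_u}{c_s}\Big)Q+\frac{\gamma_u c_u}{\gamma_s c_s}f_u .$$
   Context: Model: discrete time $t=0,1,2,\dots$; two upstream queues $q_1(t),q_2(t)\ge 0$ (indexed $i\in\{1,2\}$) merge into one downstream queue whose length is held constant at $Q$; $\gamma_0$ is the weight of the downstream queue. The generalized backpressure priority of upstream queue $i$ is $p_i(t)=(\gamma_i q_i(t)-\gamma_0 Q)c_i$. At each time step exactly one upstream queue is activated, one with maximal priority (ties broken arbitrarily); the activated queue evolves as $q_i(t+1)=q_i(t)-\min(q_i(t),c_i)+f_i$ and the non-activated one as $q_j(t+1)=q_j(t)+f_j$. A queue is in the unsaturated regime when its outflow $\min(q_i,c_i)$ equals $q_i<c_i$, and saturated when it equals $c_i$. Regime R1: exactly one upstream queue, denoted $u$, is unsaturated, and the other, denoted $s$, is saturated (it discharges its full capacity $c_s$ whenever activated). 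*)

theory Defs
  imports Complex_Main
begin

definition cap :: "real \<Rightarrow> real \<Rightarrow> nat \<Rightarrow> real" where
  "cap c k i = (if i = 1 then c else k * c)"

definition inflow :: "real \<Rightarrow> real \<Rightarrow> real \<Rightarrow> nat \<Rightarrow> real" where
  "inflow c k \<eta> i = \<eta> * cap c k i"

definition prio :: "(nat \<Rightarrow> real) \<Rightarrow> real \<Rightarrow> real \<Rightarrow> real \<Rightarrow> nat \<Rightarrow> real \<Rightarrow> real" where
  "prio \<gamma> Q c k i qi = (\<gamma> i * qi - \<gamma> 0 * Q) * cap c k i"

text \<open>Trajectory of the merge network under the generalized backpressure rule:
  q i t is the length of upstream queue i at time t, act t the queue activated at time t.\<close>
definition gbp_run :: "real \<Rightarrow> real \<Rightarrow> real \<Rightarrow> real \<Rightarrow> (nat \<Rightarrow> real)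
    \<Rightarrow> (nat \<Rightarrow> nat \<Rightarrow> real) \<Rightarrow> (nat \<Rightarrow> nat) \<Rightarrow> bool" where
  "gbp_run c k \<eta> Q \<gamma> q act \<longleftrightarrow>
     (\<forall>i\<in>{1,2}. q i 0 \<ge> 0) \<and>
     (\<forall>t. act t \<in> {1,2} \<and>
          (\<forall>j\<in>{1,2}. prio \<gamma> Q c k j (q j t) \<le> prio \<gamma> Q c k (act t) (q (act t) t)) \<and>
          (\<forall>i\<in>{1,2}. q i (Suc t) =
              (if act t = i then q i t - min (q i t) (cap c k i) + inflow c k \<eta> i
               else q i t + inflow c k \<eta> i)))"

definition regime_R1 :: "real \<Rightarrow> real \<Rightarrow> (nat \<Rightarrow> nat \<Rightarrow> real) \<Rightarrow> (nat \<Rightarrow> nat) \<Rightarrow> nat \<Rightarrow> nat \<Rightarrow> bool" where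
  "regime_R1 c k q act u s \<longleftrightarrow>
     {u, s} = {1, 2} \<and> u \<noteq> s \<and>
     (\<forall>t. act t = u \<longrightarrow> q u t < cap c k u) \<and>
     (\<forall>t. act t = s \<longrightarrow> q s t \<ge> cap c k s)"

end

theory Submission
  imports Defs
begin

locale absys =
  fixes x y :: "nat \<Rightarrow> real" and a :: "nat \<Rightarrow> bool"
    and A B fu fs cs qa :: real
  assumes A: "A > 0" and B: "B > 0" and fu: "fu > 0" and fs: "fs > 0" and cs: "2*fs < cs"
    and stu: "\<And>t. a t \<Longrightarrow> x (Suc t) = fu \<and> y (Suc t) = y t + fs \<and> A*(y t - qa) \<le> B*(x t - fu)"
    and sts: "\<And>t. \<not> a t \<Longrightarrow> x (Suc t) = x t + fu \<and> y (Suc t) = y t - cs + fs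
                \<and> B*(x t - fu) \<le> A*(y t - qa) \<and> y t \<ge> cs"
begin

definition G :: "nat \<Rightarrow> bool" where
  "G t \<longleftrightarrow> (x t = fu \<and> 2*fs - cs \<le> y t - qa \<and> y t - qa \<le> fs) \<or>
           (x t = 2*fu \<and> fs - cs \<le> y t - qa \<and> y t - qa \<le> 2*fs - cs)"

lemma Gstep: assumes "G t" shows "G (Suc t)"
proof (cases "a t")
  case True
  note h = stu[OF True]
  have "A*(y t - qa) \<le> B*(x t - fu)" using h by blast
  show ?thesis
  proof (cases "x t = fu")
    case True
    then have "A*(y t - qa) \<le> 0" using h by simp
    then have "y t - qa \<le> 0" using A by (simp add: mult_le_0_iff)
    then show ?thesis using assms h True cs fs unfolding G_def by (intro disjI1) auto
  next
    case False
    then show ?thesis using assms h cs unfolding G_def by (intro disjI1) auto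
  qed
next
  case False
  note h = sts[OF False]
  show ?thesis
  proof (cases "x t = fu")
    case True
    then have "0 \<le> A*(y t - qa)" using h by simp
    then have "y t - qa \<ge> 0" using A by (simp add: zero_le_mult_iff)
    then show ?thesis using assms h True cs unfolding G_def by auto
  next
    case F: False
    then have x2: "x t = 2*fu" "y t - qa \<le> 2*fs - cs" using assms unfolding G_def by auto
    then have "B*fu \<le> A*(y t - qa)" using h by simp
    moreover have "B*fu > 0" using B fu by simp
    moreover have "A*(y t - qa) < 0" using x2 cs A by (simp add: mult_pos_neg)
    ultimately show ?thesis by linarith
  qed
qed

lemma Gforever: assumes "G t0" shows "\<forall>t\<ge>t0. G t"
proof (intro allI impI)
  fix t assume "t0 \<le> t"
  then show "G t"
  proof (induction t rule: dec_induct)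
    case base then show ?case using assms .
  next
    case (step n) then show ?case using Gstep by blast
  qed
qed

lemma nextu_n: "y t < cs + real n * (cs - fs) \<Longrightarrow> \<exists>t'\<ge>t. a t' \<and> (\<forall>j. t \<le> j \<and> j < t' \<longrightarrow> \<not> a j)"
proof (induction n arbitrary: t)
  case 0
  then have "a t" using sts by force
  then show ?case by auto
next
  case (Suc n)
  show ?case
  proof (cases "a t")
    case True then show ?thesis by auto
  next
    case False
    then have "y (Suc t) < cs + real n * (cs - fs)" using sts[OF False] Suc.prems
      by (simp add: algebra_simps)
    from Suc.IH[OF this] obtain t' where "t' \<ge> Suc t" "a t'" "\<forall>j. Suc t \<le> j \<and> j < t' \<longrightarrow> \<not> a j"
      by blast
    then show ?thesis using False
      by (metis Suc_leD le_antisym not_less_eq_eq)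
  qed
qed

lemma nextu: "\<exists>t'\<ge>t. a t' \<and> (\<forall>j. t \<le> j \<and> j < t' \<longrightarrow> \<not> a j)"
proof -
  have D: "cs - fs > 0" using cs fs by simp
  obtain n :: nat where "(y t - cs) / (cs - fs) < n" using reals_Archimedean2 by blast
  then have "y t - cs < real n * (cs - fs)" using D by (simp add: field_simps)
  then have "y t < cs + real n * (cs - fs)" by linarith
  then show ?thesis using nextu_n by blast
qed

lemma srun: "(\<forall>j. t \<le> j \<and> j < t + m \<longrightarrow> \<not> a j) \<Longrightarrow>
   x (t+m) = x t + real m * fu \<and> y (t+m) = y t - real m * (cs - fs)"
proof (induction m)
  case 0 then show ?case by simp
next
  case (Suc m)
  then have "\<not> a (t+m)" by simp
  from sts[OF this] Suc show ?case by (simp add: algebra_simps)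
qed

lemma low: "x t = fu \<Longrightarrow> y t - qa \<le> fs \<Longrightarrow> y t - qa \<ge> 2*fs - cs - real n * fs \<Longrightarrow> \<exists>t'\<ge>t. G t'"
proof (induction n arbitrary: t)
  case 0 then show ?case unfolding G_def by auto
next
  case (Suc n)
  show ?case
  proof (cases "y t - qa \<ge> 2*fs - cs")
    case True then show ?thesis using Suc.prems unfolding G_def by auto
  next
    case False
    then have neg: "y t - qa < 0" using cs by simp
    have "a t"
    proof (rule ccontr)
      assume "\<not> a t"
      from sts[OF this] Suc.prems have "0 \<le> A*(y t - qa)" by simp
      moreover have "A*(y t - qa) < 0" using A neg by (simp add: mult_pos_neg)
      ultimately show False by simp
    qed
    from stu[OF this] have "x (Suc t) = fu" "y (Suc t) = y t + fs" by auto
    moreover have "y (Suc t) - qa \<le> fs" using calculation False cs by simp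
    moreover have "y (Suc t) - qa \<ge> 2*fs - cs - real n * fs" using calculation Suc.prems
      by (simp add: algebra_simps)
    ultimately obtain t' where "t' \<ge> Suc t" "G t'" using Suc.IH by blast
    then show ?thesis by (meson Suc_leD)
  qed
qed

lemma high: "x t = fu \<Longrightarrow> y t - qa \<ge> 2*fs - cs \<Longrightarrow> y t - qa \<le> fs + real n * (cs - 2*fs) \<Longrightarrow> \<exists>t'\<ge>t. G t'"
proof (induction n arbitrary: t)
  case 0 then show ?case unfolding G_def by auto
next
  case (Suc n)
  show ?case
  proof (cases "y t - qa \<le> fs")
    case True then show ?thesis using Suc.prems unfolding G_def by auto
  next
    case False
    then have pos: "y t - qa > 0" using fs by simp
    have na: "\<not> a t"
    proof
      assume "a t"
      from stu[OF this] Suc.prems have "A*(y t - qa) \<le> 0" by simp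
      moreover have "A*(y t - qa) > 0" using A pos by simp
      ultimately show False by simp
    qed
    obtain t' where t': "t' \<ge> t" "a t'" "\<forall>j. t \<le> j \<and> j < t' \<longrightarrow> \<not> a j" using nextu by blast
    then have "t' \<noteq> t" using na by auto
    then obtain m where m: "t' = t + Suc m" using t'(1) by (metis add_Suc_right le_Suc_ex less_imp_Suc_add nat_less_le)
    have r1: "x (t+m) = x t + real m * fu \<and> y (t+m) = y t - real m * (cs - fs)"
      by (rule srun) (use t' m in auto)
    have r2: "x (t+Suc m) = x t + real (Suc m) * fu \<and> y (t+Suc m) = y t - real (Suc m) * (cs - fs)"
      by (rule srun) (use t' m in auto)
    have "\<not> a (t+m)" using t' m by auto
    from sts[OF this] r1 Suc.prems have "B*(real m * fu) \<le> A*(y t - real m * (cs - fs) - qa)" by simp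
    moreover have "B*(real m * fu) \<ge> 0" using B fu by simp
    ultimately have "A*(y t - real m * (cs - fs) - qa) \<ge> 0" by linarith
    then have w1: "y t - real m * (cs - fs) - qa \<ge> 0" using A by (simp add: zero_le_mult_iff)
    from stu[OF t'(2)] m r2 Suc.prems have nx: "x (Suc t') = fu" "y (Suc t') = y t - real (Suc m) * (cs - fs) + fs"
      by auto
    have "y (Suc t') - qa \<ge> 2*fs - cs" using nx w1 by (simp add: algebra_simps)
    moreover have "y (Suc t') - qa \<le> fs + real n * (cs - 2*fs)"
    proof -
      have "real (Suc m) * (cs - fs) \<ge> cs - fs" using cs fs by simp
      then show ?thesis using nx Suc.prems by (simp add: algebra_simps)
    qed
    ultimately obtain t'' where "t'' \<ge> Suc t'" "G t''" using Suc.IH nx by blast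
    then show ?thesis using t'(1) by (intro exI[of _ t'']) auto
  qed
qed

lemma eventually_G: "\<exists>t0. G t0"
proof -
  obtain t1 where t1: "a t1" using nextu by blast
  from stu[OF t1] have x1: "x (Suc t1) = fu" by simp
  show ?thesis
  proof (cases "y (Suc t1) - qa \<le> fs")
    case True
    obtain n :: nat where "(2*fs - cs - (y (Suc t1) - qa)) / fs < n" using reals_Archimedean2 by blast
    then have "y (Suc t1) - qa \<ge> 2*fs - cs - real n * fs" using fs by (simp add: field_simps)
    then show ?thesis using low[OF x1 True] by blast
  next
    case False
    obtain n :: nat where "(y (Suc t1) - qa - fs) / (cs - 2*fs) < n" using reals_Archimedean2 by blast
    then have "y (Suc t1) - qa \<le> fs + real n * (cs - 2*fs)" using cs by (simp add: field_simps)
    moreover have "y (Suc t1) - qa \<ge> 2*fs - cs" using False cs fs by simp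
    ultimately show ?thesis using high[OF x1] by blast
  qed
qed

lemma final: "\<exists>t0. \<forall>t\<ge>t0. fu \<le> x t \<and> x t \<le> 2*fu \<and> qa + (fs - cs) \<le> y t \<and> y t \<le> qa + fs"
proof -
  obtain t0 where "G t0" using eventually_G by blast
  then have "\<forall>t\<ge>t0. G t" by (rule Gforever)
  then show ?thesis using fu fs cs unfolding G_def by (intro exI[of _ t0]) force
qed

end

theorem theorem1:
  fixes c k \<eta> Q :: real and \<gamma> :: "nat \<Rightarrow> real"
    and q :: "nat \<Rightarrow> nat \<Rightarrow> real" and act :: "nat \<Rightarrow> nat" and u s :: nat
  assumes "c > 0" "k > 0" "0 < \<eta>" "\<eta> < 1/2" "Q \<ge> 0"
    and "\<gamma> 0 > 0" "\<gamma> 1 > 0" "\<gamma> 2 > 0"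
    and "gbp_run c k \<eta> Q \<gamma> q act"
    and "regime_R1 c k q act u s"
  shows "\<exists>t0. \<forall>t\<ge>t0.
     inflow c k \<eta> u \<le> q u t \<and> q u t \<le> 2 * inflow c k \<eta> u \<and>
     (let qsact = \<gamma> 0 / \<gamma> s * (1 - cap c k u / cap c k s) * Q
                  + (\<gamma> u * cap c k u) / (\<gamma> s * cap c k s) * inflow c k \<eta> u
      in qsact + (inflow c k \<eta> s - cap c k s) \<le> q s t \<and> q s t \<le> qsact + inflow c k \<eta> s)"
proof -
  define cu where "cu = cap c k u"
  define cs where "cs = cap c k s"
  define fu where "fu = inflow c k \<eta> u"
  define fs where "fs = inflow c k \<eta> s"
  define qa where "qa = \<gamma> 0 / \<gamma> s * (1 - cu / cs) * Q + (\<gamma> u * cu) / (\<gamma> s * cu * 0 + \<gamma> s * cs) * fu"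
  have R: "{u, s} = {1, 2}" "u \<noteq> s" "\<And>t. act t = u \<Longrightarrow> q u t < cu"
    "\<And>t. act t = s \<Longrightarrow> q s t \<ge> cs"
    using assms(10) unfolding regime_R1_def cu_def cs_def by auto
  have us: "u \<in> {1,2}" "s \<in> {1,2}" using R(1) by auto
  have capp: "\<And>i. cap c k i > 0" unfolding cap_def using assms(1,2) by simp
  have gp: "\<And>i. i \<in> {1,2} \<Longrightarrow> \<gamma> i > 0" using assms(7,8) by auto
  have cu: "cu > 0" and cs: "cs > 0" unfolding cu_def cs_def using capp by auto
  have gu: "\<gamma> u > 0" and gs: "\<gamma> s > 0" using gp us by auto
  have fu_def': "fu = \<eta> * cu" and fs_def': "fs = \<eta> * cs"
    unfolding fu_def fs_def cu_def cs_def inflow_def by auto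
  have run: "\<And>t. act t \<in> {1,2} \<and>
          (\<forall>j\<in>{1,2}. prio \<gamma> Q c k j (q j t) \<le> prio \<gamma> Q c k (act t) (q (act t) t)) \<and>
          (\<forall>i\<in>{1,2}. q i (Suc t) =
              (if act t = i then q i t - min (q i t) (cap c k i) + inflow c k \<eta> i
               else q i t + inflow c k \<eta> i))"
    using assms(9) unfolding gbp_run_def by blast
  have key: "\<And>x y. prio \<gamma> Q c k s y - prio \<gamma> Q c k u x
      = (\<gamma> s * cs) * (y - qa) - (\<gamma> u * cu) * (x - fu)"
    unfolding prio_def qa_def cs_def[symmetric] cu_def[symmetric] using gs cs
    by (simp add: field_simps)
  interpret absys "\<lambda>t. q u t" "\<lambda>t. q s t" "\<lambda>t. act t = u" "\<gamma> s * cs" "\<gamma> u * cu" fu fs cs qa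
  proof
    show "\<gamma> s * cs > 0" "\<gamma> u * cu > 0" using gs cs gu cu by auto
    show "fu > 0" "fs > 0" using fu_def' fs_def' cu cs assms(3) by auto
    show "2 * fs < cs" using fs_def' cs assms(4) by simp
  next
    fix t assume a: "act t = u"
    have p: "prio \<gamma> Q c k s (q s t) \<le> prio \<gamma> Q c k u (q u t)" using run[of t] a us by auto
    have "q u (Suc t) = q u t - min (q u t) cu + fu" using run[of t] a us unfolding cu_def fu_def by auto
    also have "\<dots> = fu" using R(3)[OF a] by simp
    finally have 1: "q u (Suc t) = fu" .
    have 2: "q s (Suc t) = q s t + fs" using run[of t] a us R(2) unfolding fs_def by auto
    show "q u (Suc t) = fu \<and> q s (Suc t) = q s t + fs \<and>
      \<gamma> s * cs * (q s t - qa) \<le> \<gamma> u * cu * (q u t - fu)"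
      using 1 2 p key[of "q s t" "q u t"] by linarith
  next
    fix t assume a: "act t \<noteq> u"
    then have a': "act t = s" using run[of t] R(1) by auto
    have p: "prio \<gamma> Q c k u (q u t) \<le> prio \<gamma> Q c k s (q s t)" using run[of t] a' us by auto
    have "q s (Suc t) = q s t - min (q s t) cs + fs" using run[of t] a' us unfolding cs_def fs_def by auto
    also have "\<dots> = q s t - cs + fs" using R(4)[OF a'] by simp
    finally have 1: "q s (Suc t) = q s t - cs + fs" .
    have 2: "q u (Suc t) = q u t + fu" using run[of t] a' us R(2) unfolding fu_def by auto
    show "q u (Suc t) = q u t + fu \<and> q s (Suc t) = q s t - cs + fs \<and>
      \<gamma> u * cu * (q u t - fu) \<le> \<gamma> s * cs * (q s t - qa) \<and> cs \<le> q s t"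
      using 1 2 p key[of "q s t" "q u t"] R(4)[OF a'] by linarith
  qed
  from final obtain t0 where "\<forall>t\<ge>t0. fu \<le> q u t \<and> q u t \<le> 2*fu \<and> qa + (fs - cs) \<le> q s t \<and> q s t \<le> qa + fs"
    by blast
  moreover have "qa = \<gamma> 0 / \<gamma> s * (1 - cap c k u / cap c k s) * Q
                  + (\<gamma> u * cap c k u) / (\<gamma> s * cap c k s) * inflow c k \<eta> u"
    unfolding qa_def cu_def cs_def fu_def by simp
  ultimately show ?thesis unfolding fu_def fs_def cs_def Let_def by (metis (no_types, lifting))
qed

end
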